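(* Let $P=\{p_1,\dots,p_n\}$ be weighted points in $\mathbb{R}^2$ with total weight $1$, let $S=\{s_1,\dots,s_m\}$ be line segments in $\mathbb{R}^2$ of total length $1$, let $\delta>0$, and let $Q$ be the set of subsegments produced by the subdivision procedure in the context. Then $|Q|=O\!\left(\frac{nm}{\delta}\log\frac1\delta\right)$.
   Context: Subdivision procedure: starting with the segments of $S$, repeatedly, for each current subsegment $s'$: if there is a point of $P$ such that all of $s'$ lies within Euclidean distance $\delta/(nm)$ of it, leave $s'$ as is; otherwise, if there is a point $p\in P$ for which the ratio between the largest and the smallest distance from $p$ to points of $s'$ exceeds $1+\delta$, cut $s'$ into two halves. $Q$ is the final set of subsegments. *)

theory Defs
  imports "HOL-Analysis.Analysis"
begin

definition seg_near :: "real^2 \<Rightarrow> real \<Rightarrow> real^2 \<Rightarrow> real^2 \<Rightarrow> bool" where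
  "seg_near p r a b \<longleftrightarrow> (\<forall>x\<in>closed_segment a b. dist p x \<le> r)"

text \<open>Ratio between largest and smallest distance from p to points of [a,b] exceeds 1+delta
  (written multiplicatively, so a zero smallest distance counts as an infinite ratio).\<close>
definition ratio_exceeds :: "real^2 \<Rightarrow> real \<Rightarrow> real^2 \<Rightarrow> real^2 \<Rightarrow> bool" where
  "ratio_exceeds p \<delta> a b \<longleftrightarrow>
     (SUP x\<in>closed_segment a b. dist p x) > (1 + \<delta>) * (INF x\<in>closed_segment a b. dist p x)"

definition cut_piece :: "(real^2) set \<Rightarrow> real \<Rightarrow> real \<Rightarrow> real^2 \<Rightarrow> real^2 \<Rightarrow> bool" where
  "cut_piece P r \<delta> a b \<longleftrightarrow>
     \<not> (\<exists>p\<in>P. seg_near p r a b) \<and> (\<exists>p\<in>P. ratio_exceeds p \<delta> a b)"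

inductive pieces :: "(real^2) set \<Rightarrow> real \<Rightarrow> real \<Rightarrow> real^2 \<Rightarrow> real^2 \<Rightarrow> real^2 \<Rightarrow> real^2 \<Rightarrow> bool"
  for P r \<delta> a0 b0 where
  start: "pieces P r \<delta> a0 b0 a0 b0"
| left: "pieces P r \<delta> a0 b0 a b \<Longrightarrow> cut_piece P r \<delta> a b \<Longrightarrow> pieces P r \<delta> a0 b0 a (midpoint a b)"
| right: "pieces P r \<delta> a0 b0 a b \<Longrightarrow> cut_piece P r \<delta> a b \<Longrightarrow> pieces P r \<delta> a0 b0 (midpoint a b) b"

definition final_pieces :: "(real^2) set \<Rightarrow> real \<Rightarrow> real \<Rightarrow> real^2 \<Rightarrow> real^2 \<Rightarrow> ((real^2) \<times> (real^2)) set" where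
  "final_pieces P r \<delta> a0 b0 = {(a, b). pieces P r \<delta> a0 b0 a b \<and> \<not> cut_piece P r \<delta> a b}"

end

theory Submission
  imports Defs "HOL-Analysis.Analysis"
begin

lemma seg_diam: "x \<in> closed_segment a b \<Longrightarrow> y \<in> closed_segment a b \<Longrightarrow> dist x y \<le> dist (a::'a::euclidean_space) b"
  by (smt (verit) dist_decreases_closed_segment dist_in_closed_segment)

lemma ratio_near:
  assumes d: "\<delta> > 0" and r: "ratio_exceeds p \<delta> a b"
  shows "\<exists>x\<in>closed_segment a b. dist p x < dist a b / \<delta>"
proof (rule ccontr)
  assume "\<not> ?thesis"
  hence H: "\<forall>x\<in>closed_segment a b. dist a b / \<delta> \<le> dist p x" by (auto simp: not_less)
  have ne: "closed_segment a b \<noteq> {}" by auto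
  have K: "dist p y \<le> (1+\<delta>) * dist p x" if "x \<in> closed_segment a b" "y \<in> closed_segment a b" for x y
  proof -
    have "dist p y \<le> dist p x + dist x y" by (rule dist_triangle)
    also have "\<dots> \<le> dist p x + dist a b" using seg_diam[OF that] by simp
    also have "dist a b \<le> \<delta> * dist p x" using H that(1) d by (auto simp: field_simps)
    finally show ?thesis by (simp add: algebra_simps)
  qed
  have S: "(SUP y\<in>closed_segment a b. dist p y) \<le> (1+\<delta>) * dist p x" if "x \<in> closed_segment a b" for x
    by (rule cSUP_least[OF ne]) (use K that in auto)
  have "(SUP y\<in>closed_segment a b. dist p y) / (1+\<delta>) \<le> (INF x\<in>closed_segment a b. dist p x)"
    by (rule cINF_greatest[OF ne]) (use S d in \<open>auto simp: field_simps\<close>)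
  hence "(SUP y\<in>closed_segment a b. dist p y) \<le> (1+\<delta>) * (INF x\<in>closed_segment a b. dist p x)"
    using d by (simp add: field_simps)
  with r show False unfolding ratio_exceeds_def by simp
qed

lemma cut_small:
  assumes d: "\<delta> > 0" "\<delta> \<le> 1" and c: "cut_piece P r \<delta> a b"
  shows "\<exists>p\<in>P. \<exists>x\<in>closed_segment a b. dist p x < dist a b / \<delta>" "r < 2 * dist a b / \<delta>"
proof -
  from c obtain p where p: "p \<in> P" "ratio_exceeds p \<delta> a b" unfolding cut_piece_def by auto
  from ratio_near[OF d(1) p(2)] obtain x0 where x0: "x0 \<in> closed_segment a b" "dist p x0 < dist a b / \<delta>" by auto
  show "\<exists>p\<in>P. \<exists>x\<in>closed_segment a b. dist p x < dist a b / \<delta>" using p x0 by auto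
  from c p have "\<not> seg_near p r a b" unfolding cut_piece_def by auto
  then obtain x where x: "x \<in> closed_segment a b" "r < dist p x" unfolding seg_near_def by (auto simp: not_le)
  have "dist p x \<le> dist p x0 + dist x0 x" by (rule dist_triangle)
  also have "\<dots> \<le> dist p x0 + dist a b" using seg_diam[OF x0(1) x(1)] by simp
  also have "dist a b \<le> dist a b / \<delta>"
  proof -
    have "\<delta> * dist a b \<le> 1 * dist a b" using mult_right_mono[OF d(2) zero_le_dist[of a b]] .
    thus ?thesis using d by (simp add: field_simps)
  qed
  finally show "r < 2 * dist a b / \<delta>" using x x0 by linarith
qed

definition gp :: "real^2 \<Rightarrow> real^2 \<Rightarrow> real \<Rightarrow> real^2" where
  "gp a0 b0 t = a0 + t *\<^sub>R (b0 - a0)"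

lemma gp_dist: "dist (gp a0 b0 t) (gp a0 b0 s) = \<bar>t - s\<bar> * dist a0 b0"
proof -
  have "gp a0 b0 t - gp a0 b0 s = (t - s) *\<^sub>R (b0 - a0)" by (simp add: gp_def algebra_simps)
  thus ?thesis by (simp add: dist_norm norm_minus_commute)
qed

lemma gp_seg:
  assumes "\<alpha> \<le> \<beta>" "x \<in> closed_segment (gp a0 b0 \<alpha>) (gp a0 b0 \<beta>)"
  shows "\<exists>t. \<alpha> \<le> t \<and> t \<le> \<beta> \<and> x = gp a0 b0 t"
proof -
  from assms(2) obtain u where u: "0 \<le> u" "u \<le> 1" "x = (1-u) *\<^sub>R gp a0 b0 \<alpha> + u *\<^sub>R gp a0 b0 \<beta>"
    by (auto simp: in_segment)
  have "x = gp a0 b0 ((1-u)*\<alpha> + u*\<beta>)" using u(3) by (simp add: gp_def algebra_simps)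
  moreover have "\<alpha> \<le> (1-u)*\<alpha> + u*\<beta>" "(1-u)*\<alpha> + u*\<beta> \<le> \<beta>"
  proof -
    have "0 \<le> (\<beta>-\<alpha>)*u" "0 \<le> (\<beta>-\<alpha>)*(1-u)" using u assms(1) by auto
    thus "\<alpha> \<le> (1-u)*\<alpha> + u*\<beta>" "(1-u)*\<alpha> + u*\<beta> \<le> \<beta>" by (auto simp: algebra_simps)
  qed
  ultimately show ?thesis by (intro exI[where x="(1-u)*\<alpha> + u*\<beta>"]) simp
qed

lemma gp_mid: "midpoint (gp a0 b0 s) (gp a0 b0 t) = gp a0 b0 ((s+t)/2)"
  by (simp add: vec_eq_iff midpoint_def gp_def field_simps)

lemma pieces_struct:
  assumes "pieces P r \<delta> a0 b0 a b"
  shows "\<exists>k i. i < 2^k \<and> a = gp a0 b0 (real i / 2^k) \<and> b = gp a0 b0 (real (Suc i) / 2^k) \<and>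
     (0 < k \<longrightarrow> cut_piece P r \<delta> (gp a0 b0 (real (i div 2) / 2^(k-1))) (gp a0 b0 (real (Suc (i div 2)) / 2^(k-1))))"
  using assms
proof induction
  case start
  show ?case by (intro exI[where x=0]) (simp add: gp_def)
next
  case (left a b)
  then obtain k i where ki: "i < 2^k" "a = gp a0 b0 (real i / 2^k)" "b = gp a0 b0 (real (Suc i) / 2^k)" by blast
  have e1: "real (2*i) / 2^(Suc k) = real i / 2^k" by simp
  have e2: "real (Suc (2*i)) / 2^(Suc k) = (real i / 2^k + real (Suc i) / 2^k) / 2" by (simp add: field_simps)
  show ?case
    apply (rule exI[where x="Suc k"], rule exI[where x="2*i"])
    using ki left(2) by (simp only: e1 e2 gp_mid) simp
next
  case (right a b)
  then obtain k i where ki: "i < 2^k" "a = gp a0 b0 (real i / 2^k)" "b = gp a0 b0 (real (Suc i) / 2^k)" by blast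
  have e1: "real (Suc (Suc (2*i))) / 2^(Suc k) = real (Suc i) / 2^k" by (simp add: field_simps)
  have e2: "real (Suc (2*i)) / 2^(Suc k) = (real i / 2^k + real (Suc i) / 2^k) / 2" by (simp add: field_simps)
  have e3: "Suc (Suc (2*i)) = Suc (2*i+1)" by simp
  have dv: "(2*i+1) div 2 = i" by simp
  show ?case
    apply (rule exI[where x="Suc k"], rule exI[where x="2*i+1"])
    using ki right(2) by (simp only: e1 e2 e3[symmetric] gp_mid dv) (simp add: field_simps)
qed

lemma nat_interval_card:
  assumes "S \<subseteq> {i::nat. lo \<le> real i \<and> real i \<le> hi}"
  shows "finite S" "real (card S) \<le> max 0 (hi - lo + 1)"
proof -
  have sub: "S \<subseteq> {nat \<lceil>lo\<rceil> .. nat \<lfloor>hi\<rfloor>}"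
  proof
    fix i assume "i \<in> S"
    with assms have "lo \<le> real i" "real i \<le> hi" by auto
    thus "i \<in> {nat \<lceil>lo\<rceil> .. nat \<lfloor>hi\<rfloor>}"
      by (auto simp: nat_le_iff le_nat_iff ceiling_le_iff le_floor_iff)
  qed
  show "finite S" using sub finite_subset by blast
  show "real (card S) \<le> max 0 (hi - lo + 1)"
  proof (cases "S = {}")
    case True thus ?thesis by simp
  next
    case False
    then obtain i where "i \<in> S" by auto
    with assms have i: "lo \<le> real i" "real i \<le> hi" by auto
    have "card S \<le> card {nat \<lceil>lo\<rceil> .. nat \<lfloor>hi\<rfloor>}" by (rule card_mono) (use sub in auto)
    hence "card S \<le> nat \<lfloor>hi\<rfloor> + 1 - nat \<lceil>lo\<rceil>" by simp
    moreover have "real (nat \<lfloor>hi\<rfloor> + 1 - nat \<lceil>lo\<rceil>) \<le> hi - lo + 1"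
    proof (cases "nat \<lceil>lo\<rceil> \<le> nat \<lfloor>hi\<rfloor> + 1")
      case True
      hence "real (nat \<lfloor>hi\<rfloor> + 1 - nat \<lceil>lo\<rceil>) = real (nat \<lfloor>hi\<rfloor>) + 1 - real (nat \<lceil>lo\<rceil>)"
        by (simp add: of_nat_diff)
      moreover have "real (nat \<lfloor>hi\<rfloor>) \<le> hi" using i by linarith
      moreover have "lo \<le> real (nat \<lceil>lo\<rceil>)" by linarith
      ultimately show ?thesis by linarith
    next
      case False
      hence "nat \<lfloor>hi\<rfloor> + 1 - nat \<lceil>lo\<rceil> = 0" by (meson diff_is_0_eq' nat_le_linear)
      thus ?thesis using i by simp
    qed
    ultimately show ?thesis by (smt (verit) of_nat_le_iff)
  qed
qed

lemma sum_pow2: "(\<Sum>k\<le>K. (2::real)^k) = 2^Suc K - 1"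
  by (induction K) auto

lemma geo_bound:
  assumes "finite S" "\<forall>k\<in>S. (2::real)^k \<le> A" "0 \<le> A"
  shows "(\<Sum>k\<in>S. (2::real)^k) \<le> 2 * A"
proof (cases "S = {}")
  case True thus ?thesis using assms by simp
next
  case False
  let ?K = "Max S"
  have "?K \<in> S" using False assms(1) by simp
  hence KA: "(2::real)^?K \<le> A" using assms by auto
  have "(\<Sum>k\<in>S. (2::real)^k) \<le> (\<Sum>k\<le>?K. (2::real)^k)"
    by (rule sum_mono2) (use assms(1) in auto)
  also have "\<dots> = 2 * 2^?K - 1" by (simp add: sum_pow2)
  finally show ?thesis using KA by linarith
qed

lemma log_card:
  assumes "0 < A" "0 < B" "S \<subseteq> {k::nat. A < 2^k \<and> 2^k < B}"
  shows "finite S" "real (card S) \<le> max 0 (log 2 B - log 2 A + 1)"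
proof -
  have "S \<subseteq> {i::nat. log 2 A \<le> real i \<and> real i \<le> log 2 B}"
  proof
    fix k assume "k \<in> S"
    with assms have k: "A < 2^k" "2^k < B" by auto
    have lk: "log 2 ((2::real)^k) = real k" by (simp add: log_nat_power)
    have "log 2 A < log 2 (2^k)" by (rule log_less) (use k assms in auto)
    moreover have "log 2 (2^k) < log 2 B" by (rule log_less) (use k assms in auto)
    ultimately show "k \<in> {i::nat. log 2 A \<le> real i \<and> real i \<le> log 2 B}" using lk by auto
  qed
  from nat_interval_card[OF this] show "finite S" "real (card S) \<le> max 0 (log 2 B - log 2 A + 1)" by auto
qed

lemma gp_piece_dist: "dist (gp a0 b0 (real i / 2^k)) (gp a0 b0 (real (Suc i) / 2^k)) = dist a0 b0 / 2^k"
  by (simp add: gp_dist field_simps)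

lemma gp_piece_dist': "dist (gp a0 b0 (real i / 2^k)) (gp a0 b0 ((1 + real i) / 2^k)) = dist a0 b0 / 2^k"
  using gp_piece_dist[of a0 b0 i k] by simp

lemma near_count:
  assumes d: "0 < \<delta>"
  shows "real (card {i. i < 2^k \<and> (\<exists>x\<in>closed_segment (gp a0 b0 (real i/2^k)) (gp a0 b0 (real (Suc i)/2^k)).
            dist p x < dist (gp a0 b0 (real i/2^k)) (gp a0 b0 (real (Suc i)/2^k)) / \<delta>)}) \<le> 4/\<delta> + 2"
    (is "real (card ?T) \<le> _")
proof (cases "?T = {}")
  case True show ?thesis using d by (simp only: True card.empty) simp
next
  case False
  define L where "L = dist a0 b0"
  define D :: real where "D = 2^k"
  have D: "D > 0" by (simp add: D_def)
  have seg: "\<exists>t. real i / D \<le> t \<and> t \<le> real (Suc i) / D \<and> x = gp a0 b0 t"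
    if "x \<in> closed_segment (gp a0 b0 (real i/2^k)) (gp a0 b0 (real (Suc i)/2^k))" for i x
    using gp_seg[OF _ that] D unfolding D_def by (simp add: divide_right_mono)
  from False obtain i0 x0 where x0: "x0 \<in> closed_segment (gp a0 b0 (real i0/2^k)) (gp a0 b0 (real (Suc i0)/2^k))"
     "dist p x0 < L / D / \<delta>"
    by (auto simp: gp_piece_dist gp_piece_dist' L_def D_def)
  from seg[OF x0(1)] obtain t0 where t0: "x0 = gp a0 b0 t0" by auto
  have Lpos: "L > 0"
  proof -
    have "0 < L / D / \<delta>" using x0(2) zero_le_dist[of p x0] by linarith
    thus ?thesis using D d mult_pos_pos[OF D d] by (auto simp add: zero_less_divide_iff)
  qed
  have "?T \<subseteq> {i. D*t0 - 2/\<delta> - 1 \<le> real i \<and> real i \<le> D*t0 + 2/\<delta>}"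
  proof
    fix i assume "i \<in> ?T"
    then obtain x where x: "x \<in> closed_segment (gp a0 b0 (real i/2^k)) (gp a0 b0 (real (Suc i)/2^k))"
      "dist p x < L / D / \<delta>" by (auto simp: gp_piece_dist gp_piece_dist' L_def D_def)
    from seg[OF x(1)] obtain t where t: "real i / D \<le> t" "t \<le> real (Suc i) / D" "x = gp a0 b0 t" by auto
    have "\<bar>t - t0\<bar> * L = dist x x0" using t t0 by (simp add: gp_dist L_def)
    also have "\<dots> \<le> dist p x + dist p x0" by (rule dist_triangle3)
    also have "\<dots> < (2 / (D*\<delta>)) * L"
    proof -
      have "(2 / (D*\<delta>)) * L = L/D/\<delta> + L/D/\<delta>" by (simp add: field_simps)
      thus ?thesis using x(2) x0(2) by linarith
    qed
    finally have "\<bar>t - t0\<bar> * L < (2 / (D*\<delta>)) * L" .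
    hence "\<bar>t - t0\<bar> < 2 / (D*\<delta>)" using Lpos mult_less_cancel_right_pos by blast
    hence A: "D * \<bar>t - t0\<bar> < 2 / \<delta>" using D d by (simp add: field_simps)
    have B: "real i \<le> D * t" "D * t \<le> real i + 1" using t D by (simp_all add: field_simps)
    have C: "D * t - D * t0 \<le> D * \<bar>t - t0\<bar>" "D * t0 - D * t \<le> D * \<bar>t - t0\<bar>"
      using D by (simp_all add: right_diff_distrib[symmetric] mult_left_mono)
    show "i \<in> {i. D*t0 - 2/\<delta> - 1 \<le> real i \<and> real i \<le> D*t0 + 2/\<delta>}"
      using A B C by auto
  qed
  from nat_interval_card(2)[OF this] show ?thesis using d by simp
qed

lemma seg_bound:
  fixes P :: "(real^2) set" and n :: nat and a0 b0 :: "real^2"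
  assumes d: "0 < \<delta>" "\<delta> \<le> 1/2" and r: "0 < r" and P: "finite P" "card P \<le> n" and n: "1 \<le> n"
  defines "A \<equiv> 2 * real n * (4/\<delta> + 2)" and "B \<equiv> 4 * dist a0 b0 / (r * \<delta>)"
  shows "finite (final_pieces P r \<delta> a0 b0) \<and> real (card (final_pieces P r \<delta> a0 b0))
           \<le> 2*A + A * (if dist a0 b0 = 0 then 0 else max 0 (log 2 B - log 2 A + 1))"
proof -
  have d1: "\<delta> \<le> 1" using d by simp
  define cp where "cp k i \<longleftrightarrow> cut_piece P r \<delta> (gp a0 b0 (real i / 2^k)) (gp a0 b0 (real (Suc i) / 2^k))" for k i
  define D where "D k = {i. i < 2^k \<and> (0 < k \<longrightarrow> cp (k-1) (i div 2))}" for k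
  define Cs where "Cs k = {i. i < 2^k \<and> cp k i}" for k
  have Dsub: "D k \<subseteq> {..<2^k}" for k by (auto simp: D_def)
  have Dfin: "finite (D k)" for k using Dsub finite_subset by blast
  have D1: "card (D k) \<le> 2^k" for k using card_mono[OF _ Dsub[of k]] by simp
  have Csfin: "finite (Cs k)" for k by (rule finite_subset[of _ "{..<2^k}"]) (auto simp: Cs_def)
  have Csb: "real (card (Cs k)) \<le> real n * (4/\<delta>+2)" for k
  proof -
    let ?T = "\<lambda>p. {i. i < 2^k \<and> (\<exists>x\<in>closed_segment (gp a0 b0 (real i/2^k)) (gp a0 b0 (real (Suc i)/2^k)).
            dist p x < dist (gp a0 b0 (real i/2^k)) (gp a0 b0 (real (Suc i)/2^k)) / \<delta>)}"
    have "Cs k \<subseteq> (\<Union>p\<in>P. ?T p)"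
    proof
      fix i assume "i \<in> Cs k"
      hence "i < 2^k" "cp k i" by (auto simp: Cs_def)
      from cut_small(1)[OF d(1) d1 this(2)[unfolded cp_def]] \<open>i < 2^k\<close>
      show "i \<in> (\<Union>p\<in>P. ?T p)" by blast
    qed
    hence "card (Cs k) \<le> card (\<Union>p\<in>P. ?T p)"
      by (rule card_mono[rotated]) (rule finite_subset[of _ "{..<2^k}"], auto)
    also have "\<dots> \<le> (\<Sum>p\<in>P. card (?T p))" by (rule card_UN_le[OF P(1)])
    finally have "real (card (Cs k)) \<le> real (\<Sum>p\<in>P. card (?T p))"
      by (simp only: of_nat_le_iff)
    also have "\<dots> = (\<Sum>p\<in>P. real (card (?T p)))" by (rule of_nat_sum)
    also have "\<dots> \<le> (\<Sum>p\<in>P. 4/\<delta>+2)" by (rule sum_mono) (rule near_count[OF d(1)])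
    also have "\<dots> = real (card P) * (4/\<delta>+2)" by simp
    also have "\<dots> \<le> real n * (4/\<delta>+2)" using P(2) d by (intro mult_right_mono) auto
    finally show ?thesis .
  qed
  have Dsuc: "card (D (Suc k)) \<le> 2 * card (Cs k)" for k
  proof -
    have "D (Suc k) \<subseteq> (\<lambda>(j,e). 2*j+e) ` (Cs k \<times> {0,1})"
    proof
      fix i assume "i \<in> D (Suc k)"
      hence i: "i < 2^Suc k" "cp k (i div 2)" by (auto simp: D_def)
      have "i div 2 \<in> Cs k" using i by (auto simp: Cs_def)
      hence m: "(i div 2, i mod 2) \<in> Cs k \<times> {0,1}" by auto
      show "i \<in> (\<lambda>(j,e). 2*j+e) ` (Cs k \<times> {0,1})" by (rule image_eqI[OF _ m]) simp
    qed
    hence "card (D (Suc k)) \<le> card ((\<lambda>(j,e). 2*j+e) ` (Cs k \<times> {0::nat,1}))"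
      by (rule card_mono[rotated]) (use Csfin in auto)
    also have "\<dots> \<le> card (Cs k \<times> {0::nat,1})" by (rule card_image_le) (use Csfin in auto)
    also have "\<dots> = 2 * card (Cs k)" by (simp add: card_cartesian_product)
    finally show ?thesis .
  qed
  have DB: "2^(Suc k) < B" if "D (Suc k) \<noteq> {}" for k
  proof -
    from that obtain i where "i \<in> D (Suc k)" by auto
    hence "cp k (i div 2)" by (auto simp: D_def)
    from cut_small(2)[OF d(1) d1 this[unfolded cp_def]]
    have "r < 2 * (dist a0 b0 / 2^k) / \<delta>" by (simp add: gp_piece_dist gp_piece_dist')
    hence "r * \<delta> * 2^k < 2 * dist a0 b0" using d by (simp add: field_simps)
    hence "2 * 2^k * (r * \<delta>) < 4 * dist a0 b0" by (simp add: algebra_simps)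
    thus ?thesis unfolding B_def using d r by (simp add: field_simps)
  qed
  define N where "N = nat \<lceil>B\<rceil>"
  have kN: "k \<le> N" if "D k \<noteq> {}" for k
  proof (cases k)
    case 0 thus ?thesis by simp
  next
    case (Suc k')
    have "2^k < B" using DB[of k'] that Suc by simp
    moreover have "real k < 2^k"
    proof -
      have "k < 2^k" by (rule less_exp)
      hence "real k < real (2^k)" by (simp only: of_nat_less_iff)
      thus ?thesis by simp
    qed
    ultimately have "real k < B" by linarith
    thus ?thesis unfolding N_def by linarith
  qed
  let ?f = "\<lambda>(k,i). (gp a0 b0 (real i / 2^k), gp a0 b0 (real (Suc i) / 2^k))"
  have sub: "final_pieces P r \<delta> a0 b0 \<subseteq> ?f ` Sigma {..N} D"
  proof
    fix ab assume "ab \<in> final_pieces P r \<delta> a0 b0"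
    then obtain a b where ab: "ab = (a,b)" "pieces P r \<delta> a0 b0 a b" unfolding final_pieces_def by auto
    from pieces_struct[OF ab(2)] obtain k i where ki: "i < 2^k" "a = gp a0 b0 (real i / 2^k)"
      "b = gp a0 b0 (real (Suc i) / 2^k)"
      "0 < k \<longrightarrow> cut_piece P r \<delta> (gp a0 b0 (real (i div 2) / 2^(k-1))) (gp a0 b0 (real (Suc (i div 2)) / 2^(k-1)))"
      by blast
    have "i \<in> D k" using ki by (auto simp: D_def cp_def)
    hence "k \<le> N" using kN by blast
    with \<open>i \<in> D k\<close> have "(k,i) \<in> Sigma {..N} D" by auto
    thus "ab \<in> ?f ` Sigma {..N} D" using ab ki by force
  qed
  have finS: "finite (Sigma {..N} D)" using Dfin by auto
  have finF: "finite (final_pieces P r \<delta> a0 b0)" using sub finS finite_subset by blast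
  have "card (final_pieces P r \<delta> a0 b0) \<le> card (?f ` Sigma {..N} D)"
    by (rule card_mono[OF _ sub]) (use finS in auto)
  also have "\<dots> \<le> card (Sigma {..N} D)" by (rule card_image_le[OF finS])
  also have "\<dots> = (\<Sum>k\<le>N. card (D k))" by (rule card_SigmaI) (use Dfin in auto)
  finally have cF: "real (card (final_pieces P r \<delta> a0 b0)) \<le> (\<Sum>k\<le>N. real (card (D k)))"
    by (metis of_nat_le_iff of_nat_sum)
  have A1: "1 \<le> A"
  proof -
    have "2 * 1 * 2 \<le> 2 * real n * (4/\<delta>+2)" using n d by (intro mult_mono) auto
    thus ?thesis unfolding A_def by linarith
  qed
  have per: "real (card (D k)) \<le> (if 2^k \<le> A then 2^k else 0) + (if A < 2^k \<and> 2^k < B then A else 0)" for k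
  proof (cases "2^k \<le> A")
    case True
    have "real (card (D k)) \<le> 2^k" using D1[of k] by (metis of_nat_le_iff of_nat_numeral of_nat_power)
    thus ?thesis using True A1 by auto
  next
    case False
    then obtain k' where k': "k = Suc k'" using A1 by (cases k) auto
    show ?thesis
    proof (cases "D k = {}")
      case True thus ?thesis using A1 by auto
    next
      case ne: False
      have "2^k < B" using DB[of k'] ne k' by simp
      moreover have "real (card (D k)) \<le> A"
      proof -
        have "real (card (D k)) \<le> 2 * real (card (Cs k'))" using Dsuc[of k'] k' by simp
        also have "\<dots> \<le> A" using Csb[of k'] unfolding A_def by simp
        finally show ?thesis .
      qed
      ultimately show ?thesis using False by auto
    qed
  qed
  have "(\<Sum>k\<le>N. real (card (D k))) \<le> (\<Sum>k\<le>N. (if 2^k \<le> A then 2^k else 0) + (if A < 2^k \<and> 2^k < B then A else 0))"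
    by (rule sum_mono) (rule per)
  also have "\<dots> = (\<Sum>k\<le>N. (if 2^k \<le> A then 2^k else 0)) + (\<Sum>k\<le>N. (if A < 2^k \<and> 2^k < B then A else 0))"
    by (rule sum.distrib)
  also have "(\<Sum>k\<le>N. (if 2^k \<le> A then 2^k else 0)) = (\<Sum>k\<in>{k\<in>{..N}. 2^k \<le> A}. (2::real)^k)"
    by (rule sum.inter_filter[symmetric]) simp
  also have "\<dots> \<le> 2 * A" by (rule geo_bound) (use A1 in auto)
  also have "(\<Sum>k\<le>N. (if A < 2^k \<and> 2^k < B then A else 0)) = (\<Sum>k\<in>{k\<in>{..N}. A < 2^k \<and> 2^k < B}. A)"
    by (rule sum.inter_filter[symmetric]) simp
  also have "\<dots> = A * real (card {k\<in>{..N}. A < 2^k \<and> 2^k < B})" by simp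
  also have "real (card {k\<in>{..N}. A < 2^k \<and> 2^k < B}) \<le> (if dist a0 b0 = 0 then 0 else max 0 (log 2 B - log 2 A + 1))"
  proof (cases "dist a0 b0 = 0")
    case True
    hence "B = 0" unfolding B_def by simp
    hence "{k\<in>{..N}. A < 2^k \<and> 2^k < B} = {}" by auto
    thus ?thesis using True by simp
  next
    case False
    hence "0 < B" unfolding B_def using d r by simp
    have "real (card {k\<in>{..N}. A < 2^k \<and> 2^k < B}) \<le> max 0 (log 2 B - log 2 A + 1)"
      by (rule log_card(2)) (use A1 \<open>0 < B\<close> in auto)
    thus ?thesis using False by simp
  qed
  finally show ?thesis using cF finF A1 by (simp add: mult_left_mono)
qed

lemma main_bound:
  fixes n m :: nat and p :: "nat \<Rightarrow> real^2" and w :: "nat \<Rightarrow> real" and a b :: "nat \<Rightarrow> real^2" and \<delta> :: real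
  assumes n: "n \<ge> 1" and m: "m \<ge> 1" and sumL: "(\<Sum>j<m. dist (a j) (b j)) = 1" and d: "0 < \<delta>" "\<delta> \<le> 1/2"
  shows "(\<forall>j<m. finite (final_pieces (p ` {..<n}) (\<delta> / (real n * real m)) \<delta> (a j) (b j))) \<and>
     real (\<Sum>j<m. card (final_pieces (p ` {..<n}) (\<delta> / (real n * real m)) \<delta> (a j) (b j)))
       \<le> 120 * (real n * real m / \<delta>) * ln (1 / \<delta>)"
proof -
  define P where "P = p ` {..<n}"
  define r where "r = \<delta> / (real n * real m)"
  define A where "A = 2 * real n * (4/\<delta> + 2)"
  define lam where "lam = ln (1/\<delta>)"
  define L where "L j = dist (a j) (b j)" for j
  define F where "F j = final_pieces P r \<delta> (a j) (b j)" for j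
  have r: "0 < r" using n m d by (simp add: r_def)
  have P: "finite P" "card P \<le> n" unfolding P_def using card_image_le[of "{..<n}" p] by simp_all
  have "0 < 4/\<delta>" using d by simp
  hence h: "0 < 4/\<delta> + 2" by linarith
  have Apos: "0 < A" unfolding A_def by (rule mult_pos_pos[OF _ h]) (use n in simp)
  have sb: "finite (F j) \<and> real (card (F j)) \<le> 2*A + A * (if L j = 0 then 0 else max 0 (log 2 (4 * L j / (r*\<delta>)) - log 2 A + 1))" for j
    using seg_bound[OF d r P n, of "a j" "b j"] unfolding A_def F_def L_def by simp
  have ln2: "2/3 \<le> ln (2::real)" "ln (2::real) \<le> 1" "0 < ln (2::real)"
    using ln2_ge_two_thirds ln_2_less_1 by auto
  have lam: "ln 2 \<le> lam" unfolding lam_def using d by (subst ln_le_cancel_iff) (auto simp: field_simps)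
  have cb: "(if L j = 0 then 0 else max 0 (log 2 (4 * L j / (r*\<delta>)) - log 2 A + 1)) \<le> (real m * L j + lam) / ln 2 + 1" for j
  proof (cases "L j = 0")
    case True thus ?thesis using lam ln2 by simp
  next
    case False
    hence Lp: "0 < L j" by (simp add: L_def)
    define B where "B = 4 * L j / (r*\<delta>)"
    have Bp: "0 < B" unfolding B_def using Lp r d by simp
    have e1: "log 2 B - log 2 A = log 2 (B/A)" using Bp Apos by (simp add: log_divide)
    have Beq: "B = 4 * L j * real n * real m / \<delta>^2" unfolding B_def r_def using n m d by (simp add: field_simps power2_eq_square)
    have Aeq: "(real m * L j / \<delta>) * A = 8 * real n * real m * L j / \<delta>^2 + 4 * real n * real m * L j / \<delta>"
      unfolding A_def using d by (simp add: field_simps power2_eq_square)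
    have "0 \<le> 4 * real n * real m * L j / \<delta>" using Lp d by simp
    moreover have "4 * L j * real n * real m / \<delta>^2 \<le> 8 * real n * real m * L j / \<delta>^2"
      using Lp d by (intro divide_right_mono) auto
    ultimately have "B \<le> (real m * L j / \<delta>) * A" using Beq Aeq by linarith
    hence BA: "B / A \<le> real m * L j / \<delta>" using Apos by (simp add: pos_divide_le_eq)
    have mLp: "0 < real m * L j" using m Lp by simp
    have "log 2 (B/A) \<le> log 2 (real m * L j / \<delta>)"
      using BA Bp Apos mLp d by (subst log_le_cancel_iff) auto
    also have "\<dots> = ln (real m * L j / \<delta>) / ln 2" by (simp add: log_def)
    also have "ln (real m * L j / \<delta>) = ln (real m * L j) + lam"
      unfolding lam_def using mLp d Lp m by (simp add: ln_div ln_mult)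
    also have "ln (real m * L j) \<le> real m * L j" using ln_le_minus_one[OF mLp] by simp
    hence "(ln (real m * L j) + lam) / ln 2 \<le> (real m * L j + lam) / ln 2"
      using ln2 by (intro divide_right_mono) auto
    finally have "log 2 B - log 2 A + 1 \<le> (real m * L j + lam) / ln 2 + 1" using e1 by linarith
    moreover have "0 \<le> (real m * L j + lam) / ln 2 + 1" using mLp lam ln2 by simp
    ultimately show ?thesis using False unfolding B_def by simp
  qed
  have fin: "\<forall>j<m. finite (F j)" using sb by blast
  have "real (\<Sum>j<m. card (F j)) = (\<Sum>j<m. real (card (F j)))" by (rule of_nat_sum)
  also have "\<dots> \<le> (\<Sum>j<m. 2*A + A*((real m * L j + lam) / ln 2 + 1))"
  proof (rule sum_mono)
    fix j
    have "A * (if L j = 0 then 0 else max 0 (log 2 (4 * L j / (r*\<delta>)) - log 2 A + 1)) \<le> A * ((real m * L j + lam) / ln 2 + 1)"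
      using cb[of j] Apos by (intro mult_left_mono) auto
    thus "real (card (F j)) \<le> 2*A + A*((real m * L j + lam) / ln 2 + 1)" using sb[of j] by linarith
  qed
  also have "\<dots> = (\<Sum>j<m. (3*A + A*lam/ln 2) + (A * real m / ln 2) * L j)"
    by (rule sum.cong) (auto simp: field_simps)
  also have "\<dots> = real m * (3*A + A*lam/ln 2) + (A * real m / ln 2) * (\<Sum>j<m. L j)"
    by (simp add: sum.distrib sum_distrib_left)
  also have "\<dots> = A * real m * (3 + (1 + lam) / ln 2)"
    using sumL unfolding L_def by (simp add: field_simps)
  also have "\<dots> \<le> (10 * real n / \<delta>) * real m * (12 * lam)"
  proof -
    have A10: "A \<le> 10 * real n / \<delta>"
    proof -
      have "4 * real n * \<delta> \<le> 2 * real n" using d n by (simp add: mult_left_mono)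
      hence "4 * real n \<le> 2 * real n / \<delta>" using d by (simp add: field_simps)
      thus ?thesis unfolding A_def using d by (simp add: field_simps)
    qed
    have "(1 + lam) / ln 2 \<le> (1 + lam) / (2/3)" using ln2 lam by (intro divide_left_mono) auto
    also have "(1 + lam) / (2/3) = 3/2 + 3/2 * lam" by simp
    finally have Y: "(1 + lam) / ln 2 \<le> 3/2 + 3/2 * lam" .
    have X: "3 + (1 + lam) / ln 2 \<le> 12 * lam" using Y ln2 lam by linarith
    have X0: "0 \<le> 3 + (1 + lam) / ln 2" using ln2 lam by simp
    show ?thesis using A10 X X0 Apos m d by (intro mult_mono) auto
  qed
  also have "\<dots> = 120 * (real n * real m / \<delta>) * lam" by (simp add: field_simps)
  finally show ?thesis using fin unfolding F_def P_def r_def lam_def by simp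
qed

theorem lemma5:
  shows "\<exists>C>0. \<forall>(n::nat) (m::nat) (p::nat \<Rightarrow> real^2) (w::nat \<Rightarrow> real) (a::nat \<Rightarrow> real^2) (b::nat \<Rightarrow> real^2) (\<delta>::real).
     n \<ge> 1 \<longrightarrow> m \<ge> 1 \<longrightarrow>
     inj_on p {..<n} \<longrightarrow> (\<forall>i<n. w i \<ge> 0) \<longrightarrow> (\<Sum>i<n. w i) = 1 \<longrightarrow>
     inj_on (\<lambda>j. closed_segment (a j) (b j)) {..<m} \<longrightarrow>
     (\<Sum>j<m. dist (a j) (b j)) = 1 \<longrightarrow>
     0 < \<delta> \<longrightarrow> \<delta> \<le> 1/2 \<longrightarrow>
     (\<forall>j<m. finite (final_pieces (p ` {..<n}) (\<delta> / (real n * real m)) \<delta> (a j) (b j))) \<and>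
     real (\<Sum>j<m. card (final_pieces (p ` {..<n}) (\<delta> / (real n * real m)) \<delta> (a j) (b j)))
       \<le> C * (real n * real m / \<delta>) * ln (1 / \<delta>)"
  apply (rule exI[of _ "120::real"])
  apply (rule conjI)
   apply simp
  apply (intro allI impI)
  subgoal for n m p w a b \<delta> using main_bound[of n m a b \<delta> p] by blast
  done

end
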